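(* Let $R$ be a commutative ring with unity and let $G=\{(a,b,c):a,b,c\in R\}$ with operation $(a,b,c)\cdot(a',b',c')=(a+a',b+b',c+c'+ab')$. Then $G$ is a group of nilpotence class at most two with $[(a,b,c),(a',b',c')]=(0,0,ab'-a'b)$, and for each $x\in R$ the map $\psi_x(a,b,c)=(xa,xb,x^2c)$ is an endomorphism of $G$. Setting $g\circ_x h=g\cdot\psi_x(g)\cdot h\cdot\psi_x(g)^{-1}$, one has, for $g=(a,b,c)$, $h=(a',b',c')$, $g\circ_x h=g\cdot h\cdot(0,0,x(ab'-a'b))$; the family $(\circ_x:x\in R)$ is a brace block on $G$, and its operations are pairwise distinct, so the brace block has cardinality $|R|$. Moreover, if $R$ is a topological ring and $(r_n)$ is a sequence in $R$ converging to $0$, then $\lim_{n\to\infty}g\circ_{r_n}h=g\cdot h$ for all $g,h\in G$ (in the product topology on $G=R^3$).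
   Context: Commutator convention: $[x,y]=xyx^{-1}y^{-1}$. A skew brace is a triple $(G,\cdot,\circ)$ where $(G,\cdot)$ and $(G,\circ)$ are groups and $g\circ(h\cdot k)=(g\circ h)\cdot g^{-1}\cdot(g\circ k)$ for all $g,h,k$. A bi-skew brace is a triple $(G,\cdot,\circ)$ such that both $(G,\cdot,\circ)$ and $(G,\circ,\cdot)$ are skew braces. A brace block on a set $G$ is a family of group operations on $G$ any two of which form a bi-skew brace. *)

theory Defs
  imports Complex_Main "HOL-Algebra.Group"
begin

definition commutator :: "('g, 'm) monoid_scheme \<Rightarrow> 'g \<Rightarrow> 'g \<Rightarrow> 'g" where
  "commutator G x y = x \<otimes>\<^bsub>G\<^esub> y \<otimes>\<^bsub>G\<^esub> inv\<^bsub>G\<^esub> x \<otimes>\<^bsub>G\<^esub> inv\<^bsub>G\<^esub> y"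

definition nilpotent_class_le2 :: "('g, 'm) monoid_scheme \<Rightarrow> bool" where
  "nilpotent_class_le2 G \<longleftrightarrow> group G \<and>
     (\<forall>x\<in>carrier G. \<forall>y\<in>carrier G. \<forall>z\<in>carrier G.
        commutator G (commutator G x y) z = \<one>\<^bsub>G\<^esub>)"

definition skew_brace :: "'g monoid \<Rightarrow> 'g monoid \<Rightarrow> bool" where
  "skew_brace G H \<longleftrightarrow> group G \<and> group H \<and> carrier G = carrier H \<and>
     (\<forall>g\<in>carrier G. \<forall>h\<in>carrier G. \<forall>k\<in>carrier G.
        g \<otimes>\<^bsub>H\<^esub> (h \<otimes>\<^bsub>G\<^esub> k)
          = (g \<otimes>\<^bsub>H\<^esub> h) \<otimes>\<^bsub>G\<^esub> inv\<^bsub>G\<^esub> g \<otimes>\<^bsub>G\<^esub> (g \<otimes>\<^bsub>H\<^esub> k))"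

definition bi_skew_brace :: "'g monoid \<Rightarrow> 'g monoid \<Rightarrow> bool" where
  "bi_skew_brace G H \<longleftrightarrow> skew_brace G H \<and> skew_brace H G"

definition brace_block :: "'g set \<Rightarrow> 'i set \<Rightarrow> ('i \<Rightarrow> 'g monoid) \<Rightarrow> bool" where
  "brace_block S I F \<longleftrightarrow> (\<forall>i\<in>I. group (F i) \<and> carrier (F i) = S) \<and>
     (\<forall>i\<in>I. \<forall>j\<in>I. bi_skew_brace (F i) (F j))"

fun heis_mult :: "'a::comm_ring_1 \<times> 'a \<times> 'a \<Rightarrow> 'a \<times> 'a \<times> 'a \<Rightarrow> 'a \<times> 'a \<times> 'a" where
  "heis_mult (a, b, c) (a', b', c') = (a + a', b + b', c + c' + a * b')"

definition heis :: "('a::comm_ring_1 \<times> 'a \<times> 'a) monoid" where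
  "heis = \<lparr>carrier = UNIV, mult = heis_mult, one = (0, 0, 0)\<rparr>"

fun psi :: "'a::comm_ring_1 \<Rightarrow> 'a \<times> 'a \<times> 'a \<Rightarrow> 'a \<times> 'a \<times> 'a" where
  "psi x (a, b, c) = (x * a, x * b, x^2 * c)"

definition circ_op :: "'a::comm_ring_1 \<Rightarrow> 'a \<times> 'a \<times> 'a \<Rightarrow> 'a \<times> 'a \<times> 'a \<Rightarrow> 'a \<times> 'a \<times> 'a" where
  "circ_op x g h = g \<otimes>\<^bsub>heis\<^esub> psi x g \<otimes>\<^bsub>heis\<^esub> h \<otimes>\<^bsub>heis\<^esub> inv\<^bsub>heis\<^esub> (psi x g)"

definition circ_struct :: "'a::comm_ring_1 \<Rightarrow> ('a \<times> 'a \<times> 'a) monoid" where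
  "circ_struct x = \<lparr>carrier = UNIV, mult = circ_op x, one = (0, 0, 0)\<rparr>"

end

theory Submission
  imports Defs
begin

fun cmul :: "'a::comm_ring_1 \<Rightarrow> 'a \<times> 'a \<times> 'a \<Rightarrow> 'a \<times> 'a \<times> 'a \<Rightarrow> 'a \<times> 'a \<times> 'a" where
  "cmul x (a, b, c) (a', b', c') = (a + a', b + b', c + c' + a * b' + x * (a * b' - a' * b))"

lemma cgroup: "group \<lparr>carrier = UNIV, mult = cmul x, one = (0, 0, 0)\<rparr>"
proof (rule groupI)
  fix g h k :: "'a \<times> 'a \<times> 'a"
  show "g \<otimes>\<^bsub>\<lparr>carrier = UNIV, mult = cmul x, one = (0, 0, 0)\<rparr>\<^esub> h \<otimes>\<^bsub>\<lparr>carrier = UNIV, mult = cmul x, one = (0, 0, 0)\<rparr>\<^esub> k =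
        g \<otimes>\<^bsub>\<lparr>carrier = UNIV, mult = cmul x, one = (0, 0, 0)\<rparr>\<^esub> (h \<otimes>\<^bsub>\<lparr>carrier = UNIV, mult = cmul x, one = (0, 0, 0)\<rparr>\<^esub> k)"
    by (cases g; cases h; cases k) (simp add: algebra_simps)
next
  fix g :: "'a \<times> 'a \<times> 'a"
  show "\<exists>y\<in>carrier \<lparr>carrier = UNIV, mult = cmul x, one = (0, 0, 0)\<rparr>.
          y \<otimes>\<^bsub>\<lparr>carrier = UNIV, mult = cmul x, one = (0, 0, 0)\<rparr>\<^esub> g = \<one>\<^bsub>\<lparr>carrier = UNIV, mult = cmul x, one = (0, 0, 0)\<rparr>\<^esub>"
  proof (cases g)
    case (fields a b c)
    show ?thesis by (rule bexI[where x="(-a,-b,a*b-c)"]) (simp_all add: fields algebra_simps)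
  qed
qed auto

lemma cinv: "inv\<^bsub>\<lparr>carrier = UNIV, mult = cmul x, one = (0, 0, 0)\<rparr>\<^esub> (a, b, c) = (-a, -b, a*b - c)"
  by (rule group.inv_equality[OF cgroup]) (simp_all add: algebra_simps)

lemma heis_eq: "(heis :: ('a::comm_ring_1 \<times> 'a \<times> 'a) monoid) = \<lparr>carrier = UNIV, mult = cmul 0, one = (0, 0, 0)\<rparr>"
proof -
  have "heis_mult = (cmul 0 :: 'a \<times> 'a \<times> 'a \<Rightarrow> _)"
    by (intro ext) (auto simp: split: prod.splits)
  thus ?thesis by (simp add: heis_def)
qed

lemma heis_group: "group (heis :: ('a::comm_ring_1 \<times> 'a \<times> 'a) monoid)"
  using cgroup heis_eq by metis

lemma heis_mult': "(a, b, c) \<otimes>\<^bsub>heis\<^esub> (a', b', c') = (a + a', b + b', c + c' + a * b')"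
  by (simp add: heis_def)

lemma heis_inv: "inv\<^bsub>heis\<^esub> (a, b, c) = (-a, -b, a*b - (c::'a::comm_ring_1))"
  using cinv[of 0 a b c] heis_eq by metis

lemma circ_formula: "circ_op x (a, b, c) (a', b', c') = cmul x (a, b, c) (a', b', c')"
  by (simp add: circ_op_def heis_mult' heis_inv power2_eq_square algebra_simps)

lemma circ_eq: "circ_struct x = \<lparr>carrier = UNIV, mult = cmul x, one = (0, 0, 0)\<rparr>"
proof -
  have "circ_op x = cmul x"
    by (intro ext) (auto simp: circ_formula split: prod.splits)
  thus ?thesis by (simp add: circ_struct_def)
qed

lemma comm_formula: "commutator heis (a, b, c) (a', b', c') = (0, 0, a * b' - a' * (b::'a::comm_ring_1))"
  by (simp add: commutator_def heis_mult' heis_inv algebra_simps)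

lemma skew: "skew_brace (circ_struct x) (circ_struct y)"
  unfolding skew_brace_def circ_eq
proof (intro conjI cgroup ballI)
  fix g h k :: "'a \<times> 'a \<times> 'a"
  show "g \<otimes>\<^bsub>\<lparr>carrier = UNIV, mult = cmul y, one = (0, 0, 0)\<rparr>\<^esub> (h \<otimes>\<^bsub>\<lparr>carrier = UNIV, mult = cmul x, one = (0, 0, 0)\<rparr>\<^esub> k) =
       (g \<otimes>\<^bsub>\<lparr>carrier = UNIV, mult = cmul y, one = (0, 0, 0)\<rparr>\<^esub> h) \<otimes>\<^bsub>\<lparr>carrier = UNIV, mult = cmul x, one = (0, 0, 0)\<rparr>\<^esub>
       inv\<^bsub>\<lparr>carrier = UNIV, mult = cmul x, one = (0, 0, 0)\<rparr>\<^esub> g \<otimes>\<^bsub>\<lparr>carrier = UNIV, mult = cmul x, one = (0, 0, 0)\<rparr>\<^esub>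
       (g \<otimes>\<^bsub>\<lparr>carrier = UNIV, mult = cmul y, one = (0, 0, 0)\<rparr>\<^esub> k)"
    by (cases g; cases h; cases k) (simp add: cinv algebra_simps)
qed simp

theorem mainTheorem10:
  fixes dummyR :: "'a::comm_ring_1 itself"
    and r :: "nat \<Rightarrow> 'b::{comm_ring_1, topological_group_add, topological_semigroup_mult}"
  shows "group (heis :: ('a \<times> 'a \<times> 'a) monoid)
    \<and> nilpotent_class_le2 (heis :: ('a \<times> 'a \<times> 'a) monoid)
    \<and> (\<forall>a b c a' b' c' :: 'a.
          commutator heis (a, b, c) (a', b', c') = (0, 0, a * b' - a' * b))
    \<and> (\<forall>x :: 'a. psi x \<in> hom heis heis)
    \<and> (\<forall>(x :: 'a) a b c a' b' c'.
          circ_op x (a, b, c) (a', b', c')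
            = (a, b, c) \<otimes>\<^bsub>heis\<^esub> (a', b', c') \<otimes>\<^bsub>heis\<^esub> (0, 0, x * (a * b' - a' * b)))
    \<and> brace_block (UNIV :: ('a \<times> 'a \<times> 'a) set) UNIV circ_struct
    \<and> inj (circ_op :: 'a \<Rightarrow> _)
    \<and> (r \<longlonglongrightarrow> 0 \<longrightarrow>
         (\<forall>g h :: 'b \<times> 'b \<times> 'b.
            (\<lambda>n. circ_op (r n) g h) \<longlonglongrightarrow> g \<otimes>\<^bsub>heis\<^esub> h))"
proof (intro conjI)
  show "group (heis :: ('a \<times> 'a \<times> 'a) monoid)" by (rule heis_group)
  show "nilpotent_class_le2 (heis :: ('a \<times> 'a \<times> 'a) monoid)"
    unfolding nilpotent_class_le2_def
  proof (intro conjI heis_group ballI)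
    fix g h k :: "'a \<times> 'a \<times> 'a"
    show "commutator heis (commutator heis g h) k = \<one>\<^bsub>heis\<^esub>"
      by (cases g; cases h; cases k) (simp add: comm_formula, simp add: heis_def)
  qed
  show "\<forall>a b c a' b' c' :: 'a. commutator heis (a, b, c) (a', b', c') = (0, 0, a * b' - a' * b)"
    by (simp add: comm_formula)
  show "\<forall>x :: 'a. psi x \<in> hom heis heis"
  proof
    fix x :: 'a
    show "psi x \<in> hom heis heis"
    proof (rule homI)
      fix g h :: "'a \<times> 'a \<times> 'a"
      show "psi x (g \<otimes>\<^bsub>heis\<^esub> h) = psi x g \<otimes>\<^bsub>heis\<^esub> psi x h"
        by (cases g; cases h) (simp add: heis_mult' power2_eq_square algebra_simps)
    qed (simp add: heis_def)
  qed
  show "\<forall>(x :: 'a) a b c a' b' c'.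
          circ_op x (a, b, c) (a', b', c')
            = (a, b, c) \<otimes>\<^bsub>heis\<^esub> (a', b', c') \<otimes>\<^bsub>heis\<^esub> (0, 0, x * (a * b' - a' * b))"
    by (simp add: circ_formula heis_mult')
  show "brace_block (UNIV :: ('a \<times> 'a \<times> 'a) set) UNIV circ_struct"
    unfolding brace_block_def bi_skew_brace_def
    by (simp add: skew) (simp add: circ_eq cgroup)
  show "inj (circ_op :: 'a \<Rightarrow> _)"
  proof (rule injI)
    fix x y :: 'a
    assume "circ_op x = circ_op y"
    hence "circ_op x (1,0,0) (0,1,0) = circ_op y (1,0,0) (0,1,0)" by simp
    thus "x = y" by (simp add: circ_formula)
  qed
  show "r \<longlonglongrightarrow> 0 \<longrightarrow> (\<forall>g h :: 'b \<times> 'b \<times> 'b. (\<lambda>n. circ_op (r n) g h) \<longlonglongrightarrow> g \<otimes>\<^bsub>heis\<^esub> h)"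
  proof (intro impI allI)
    fix g h :: "'b \<times> 'b \<times> 'b"
    assume r: "r \<longlonglongrightarrow> 0"
    obtain a b c where g: "g = (a,b,c)" by (cases g)
    obtain a' b' c' where h: "h = (a',b',c')" by (cases h)
    have "(\<lambda>n. c + c' + a * b' + r n * (a * b' - a' * b)) \<longlonglongrightarrow> c + c' + a * b' + 0 * (a * b' - a' * b)"
      by (intro tendsto_intros r)
    hence "(\<lambda>n. (a + a', b + b', c + c' + a * b' + r n * (a * b' - a' * b))) \<longlonglongrightarrow> (a + a', b + b', c + c' + a * b')"
      by (intro tendsto_Pair tendsto_const) simp_all
    thus "(\<lambda>n. circ_op (r n) g h) \<longlonglongrightarrow> g \<otimes>\<^bsub>heis\<^esub> h"
      by (simp add: g h circ_formula heis_mult')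
  qed
qed

end
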